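(* Let $n\ge1$ and $c\ge2$ be integers and $C=\{0,1,\dots,c-1\}\subseteq\mathbb{Z}/n\mathbb{Z}$. For all nonempty $A,B\subseteq\mathbb{Z}/n\mathbb{Z}$, \[ |A+B+C|\ge\min\{n,\ |A|+|B|+(c-2)\}. \]
   Context: For subsets $X,Y$ of an abelian group, $X+Y=\{x+y: x\in X, y\in Y\}$; elements of $C$ are taken modulo $n$. *)

theory Defs
  imports Main
begin

text \<open>Z/nZ is represented by the residues {0..<n} (as nat); the sumset X + Y in Z/nZ
  is the set of residues (x + y) mod n.\<close>

definition sumset_mod :: "nat \<Rightarrow> nat set \<Rightarrow> nat set \<Rightarrow> nat set" where
  "sumset_mod n X Y = {(x + y) mod n | x y. x \<in> X \<and> y \<in> Y}"

end

theory Submission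
  imports Defs
begin

definition sh :: "nat \<Rightarrow> nat \<Rightarrow> nat set \<Rightarrow> nat set" where
  "sh n t X = (\<lambda>x. (x + t) mod n) ` X"

lemma sh_back: "(x::nat) < n \<Longrightarrow> ((x + t) mod n + (n - t mod n)) mod n = x"
proof -
  assume x: "x < n"
  have "((x + t) mod n + (n - t mod n)) mod n = (x + t + (n - t mod n)) mod n"
    by (rule mod_add_left_eq)
  also have "x + t + (n - t mod n) = x + n * (t div n + 1)"
  proof -
    have "t mod n < n" using x by simp
    moreover have "t = n * (t div n) + t mod n" by simp
    ultimately have "x + t + (n - t mod n) = x + n * (t div n) + n" by linarith
    then show ?thesis by (simp add: algebra_simps)
  qed
  also have "(x + n * (t div n + 1)) mod n = x mod n" by (rule mod_mult_self2)
  also have "x mod n = x" using x by simp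
  finally show ?thesis .
qed

lemma sh_inj: "inj_on (\<lambda>x::nat. (x+t) mod n) {0..<n}"
proof (rule inj_onI)
  fix x y assume x: "x \<in> {0..<n}" and y: "y \<in> {0..<n}" and e: "(x+t) mod n = (y+t) mod n"
  have "x = ((x + t) mod n + (n - t mod n)) mod n" using x sh_back[of x n t] by simp
  also have "\<dots> = ((y + t) mod n + (n - t mod n)) mod n" using e by simp
  also have "\<dots> = y" using y sh_back[of y n t] by simp
  finally show "x = y" .
qed

lemma card_sh: "X \<subseteq> {0..<n} \<Longrightarrow> card (sh n t X) = card X"
  unfolding sh_def by (rule card_image, rule inj_on_subset[OF sh_inj])

lemma sh_sub: "n > 0 \<Longrightarrow> sh n t X \<subseteq> {0..<n}"
  unfolding sh_def by auto

lemma sub_mod: "(b::nat) < n \<Longrightarrow> (b + (a + n - b) mod n) mod n = a mod n"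
proof -
  assume "b < n"
  have "(b + (a + n - b) mod n) mod n = (b + (a + n - b)) mod n" by (rule mod_add_right_eq)
  also have "b + (a + n - b) = a + n" using \<open>b<n\<close> by simp
  finally show ?thesis by simp
qed

lemma closed_full:
  assumes X: "X \<subseteq> {0..<n}" "X \<noteq> {}" and c: "sh n 1 X \<subseteq> X"
  shows "X = {0..<n}"
proof -
  have "\<forall>x\<in>X. (x + k) mod n \<in> X" for k
  proof (induction k)
    case 0 then show ?case using X by auto
  next
    case (Suc k)
    show ?case
    proof
      fix x assume "x \<in> X"
      have "(x + Suc k) mod n = ((x + k) mod n + 1) mod n" by (simp add: mod_Suc_eq)
      also have "\<dots> \<in> sh n 1 X" unfolding sh_def using Suc \<open>x\<in>X\<close> by blast
      finally show "(x + Suc k) mod n \<in> X" using c by blast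
    qed
  qed
  moreover obtain x0 where x0: "x0 \<in> X" using X by blast
  ultimately have "y \<in> X" if "y < n" for y
    using sub_mod[of x0 n y] x0 X that by (metis atLeastLessThan_iff mod_less subsetD)
  then show ?thesis using X by auto
qed

lemma key:
  assumes X: "X \<subseteq> {0..<n}" "X \<noteq> {}" "X \<noteq> {0..<n}"
    and T: "T \<subseteq> {0..<n}" and cl: "\<forall>t\<in>T. sh n t X \<subseteq> X"
  shows "card X + card T \<le> card (X \<union> sh n 1 X)"
proof -
  have n: "n > 0" using X by auto
  have finX: "finite X" using X finite_subset by blast
  have eqT: "sh n t X = X" if "t \<in> T" for t
    using card_subset_eq[OF finX] cl that card_sh[OF X(1)] by metis
  define D where "D = sh n 1 X - X"
  have "D \<noteq> {}" using closed_full[OF X(1,2)] X(3) unfolding D_def by blast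
  then obtain d where d: "d \<in> D" by blast
  then obtain x where x: "x \<in> X" "d = (x+1) mod n" "d \<notin> X" unfolding D_def sh_def by blast
  have dn: "d < n" using x n by simp
  have img: "(\<lambda>t. (t+d) mod n) ` T \<subseteq> D"
  proof
    fix y assume "y \<in> (\<lambda>t. (t+d) mod n) ` T"
    then obtain t where t: "t \<in> T" "y = (t+d) mod n" by blast
    have "y = ((x+t) mod n + 1) mod n" using t x
      by (simp add: mod_add_left_eq mod_add_right_eq add.commute add.left_commute mod_Suc_eq)
    moreover have "(x+t) mod n \<in> X" using eqT[OF t(1)] x unfolding sh_def by blast
    ultimately have "y \<in> sh n 1 X" unfolding sh_def by blast
    moreover have "y \<notin> X"
    proof
      assume "y \<in> X"
      then have "y \<in> sh n t X" using eqT[OF t(1)] by simp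
      then obtain x' where "x' \<in> X" "y = (x'+t) mod n" unfolding sh_def by blast
      moreover have "x' \<in> {0..<n}" using \<open>x' \<in> X\<close> X(1) by blast
      moreover have "d \<in> {0..<n}" using dn by simp
      moreover have "(\<lambda>x. (x+t) mod n) x' = (\<lambda>x. (x+t) mod n) d"
        using \<open>y = (x'+t) mod n\<close> t(2) by (simp add: add.commute)
      ultimately have "x' = d" using inj_onD[OF sh_inj[of t n]] by blast
      then show False using \<open>x'\<in>X\<close> x by simp
    qed
    ultimately show "y \<in> D" unfolding D_def by blast
  qed
  have finD: "finite D" unfolding D_def sh_def using finX by simp
  have "card T = card ((\<lambda>t. (t+d) mod n) ` T)"
    by (rule card_image[symmetric], rule inj_on_subset[OF sh_inj T])
  also have "\<dots> \<le> card D" using card_mono[OF finD img] .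
  finally have "card T \<le> card D" .
  moreover have "X \<union> sh n 1 X = X \<union> D" unfolding D_def by blast
  moreover have "card (X \<union> D) = card X + card D"
    using card_Un_disjoint[OF finX finD] unfolding D_def by blast
  ultimately show ?thesis by simp
qed

lemma L1:
  assumes X: "X \<subseteq> {0..<n}" "X \<noteq> {}"
  shows "min n (card X + 1) \<le> card (X \<union> sh n 1 X)"
proof (cases "X = {0..<n}")
  case True
  have "n > 0" using X by auto
  then have "X \<union> sh n 1 X = {0..<n}" using True sh_sub by blast
  then show ?thesis by simp
next
  case False
  have "sh n 0 X \<subseteq> X" unfolding sh_def using X by auto
  have T0: "{0::nat} \<subseteq> {0..<n}" using X by auto
  have "\<forall>t\<in>{0}. sh n t X \<subseteq> X" using \<open>sh n 0 X \<subseteq> X\<close> by simp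
  then have "card X + card {0::nat} \<le> card (X \<union> sh n 1 X)" using key[OF X False T0] by blast
  then show ?thesis by simp
qed


lemma sumset_sub: "n > 0 \<Longrightarrow> sumset_mod n X Y \<subseteq> {0..<n}"
  unfolding sumset_mod_def by auto

lemma M:
  assumes "A \<subseteq> {0..<n}" "B \<subseteq> {0..<n}" "A \<noteq> {}" "B \<noteq> {}"
  shows "min n (card A + card B) \<le> card (sumset_mod n A B \<union> sh n 1 (sumset_mod n A B))"
  using assms
proof (induction "card B" arbitrary: A B rule: less_induct)
  case less
  have n: "n > 0" using less.prems by auto
  have finA: "finite A" and finB: "finite B" using less.prems finite_subset by blast+
  define X where "X = sumset_mod n A B"
  have Xs: "X \<subseteq> {0..<n}" unfolding X_def using sumset_sub n .
  have finX: "finite X" using Xs finite_subset by blast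
  have finZ: "finite (X \<union> sh n 1 X)" using finX unfolding sh_def by simp
  show ?case
  proof (cases "\<exists>a\<in>A. \<exists>b\<in>B. \<not> sh n ((a + n - b) mod n) B \<subseteq> A")
    case True
    then obtain a b e where ab: "a \<in> A" "b \<in> B" and ed: "e = (a + n - b) mod n"
      and e: "\<not> sh n e B \<subseteq> A" by blast
    define B' where "B' = {y\<in>B. (y+e) mod n \<in> A}"
    define A' where "A' = A \<union> sh n e B"
    have an: "a < n" "b < n" using ab less.prems by auto
    have "(b + e) mod n = a" using sub_mod[of b n a] an ed by simp
    then have bB': "b \<in> B'" using ab unfolding B'_def by simp
    from e obtain z where z: "z \<in> B" "(z+e) mod n \<notin> A" unfolding sh_def by blast
    have "B' \<subset> B" using z unfolding B'_def by blast
    then have lt: "card B' < card B" using finB psubset_card_mono by blast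
    have A's: "A' \<subseteq> {0..<n}" unfolding A'_def using less.prems(1) sh_sub[OF n] by blast
    have B's: "B' \<subseteq> {0..<n}" unfolding B'_def using less.prems(2) by blast
    have IH: "min n (card A' + card B') \<le> card (sumset_mod n A' B' \<union> sh n 1 (sumset_mod n A' B'))"
    proof -
      have "A' \<noteq> {}" using less.prems(3) unfolding A'_def by blast
      moreover have "B' \<noteq> {}" using bB' by blast
      ultimately show ?thesis using less.hyps[OF lt A's B's] by blast
    qed
    have X'X: "sumset_mod n A' B' \<subseteq> X"
    proof
      fix w assume "w \<in> sumset_mod n A' B'"
      then obtain x y where w: "w = (x+y) mod n" "x \<in> A'" "y \<in> B'" unfolding sumset_mod_def by blast
      show "w \<in> X"
      proof (cases "x \<in> A")
        case True then show ?thesis using w unfolding X_def sumset_mod_def B'_def by blast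
      next
        case False
        then obtain z where z: "z \<in> B" "x = (z+e) mod n" using w unfolding A'_def sh_def by blast
        have e1: "((z+e) mod n + y) mod n = (z+e+y) mod n" by (rule mod_add_left_eq)
        have e2: "((y+e) mod n + z) mod n = (y+e+z) mod n" by (rule mod_add_left_eq)
        have "z+e+y = y+e+z" by simp
        then have "w = ((y+e) mod n + z) mod n" by (simp only: w(1) z(2) e1 e2)
        moreover have "(y+e) mod n \<in> A" using w unfolding B'_def by blast
        ultimately show ?thesis using z unfolding X_def sumset_mod_def by blast
      qed
    qed
    then have "sumset_mod n A' B' \<union> sh n 1 (sumset_mod n A' B') \<subseteq> X \<union> sh n 1 X"
      unfolding sh_def by (intro Un_mono image_mono)
    then have c1: "card (sumset_mod n A' B' \<union> sh n 1 (sumset_mod n A' B')) \<le> card (X \<union> sh n 1 X)"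
      by (rule card_mono[OF finZ])
    have "sh n e B - A = (\<lambda>z. (z+e) mod n) ` (B - B')"
      unfolding sh_def B'_def by blast
    then have "card (sh n e B - A) = card (B - B')"
      using card_sh[of "B - B'" n e] less.prems(2) unfolding sh_def by auto
    also have "\<dots> = card B - card B'" using \<open>B' \<subset> B\<close> finB by (meson card_Diff_subset finite_subset psubset_imp_subset)
    finally have cd: "card (sh n e B - A) = card B - card B'" .
    have "A' = A \<union> (sh n e B - A)" unfolding A'_def by blast
    moreover have "finite (sh n e B - A)" using finB unfolding sh_def by simp
    ultimately have "card A' = card A + card (sh n e B - A)"
      using card_Un_disjoint finA by (metis Diff_disjoint)
    with cd lt have "card A' + card B' = card A + card B" by simp
    with IH c1 show ?thesis unfolding X_def by simp
  next
    case False
    then have cl: "\<forall>a\<in>A. \<forall>b\<in>B. sh n ((a + n - b) mod n) B \<subseteq> A" by blast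
    obtain b0 where b0: "b0 \<in> B" using less.prems by blast
    have b0n: "b0 < n" using b0 less.prems by auto
    define k where "k = n - b0"
    define T where "T = sh n k B"
    have cT: "card T = card B" unfolding T_def using card_sh less.prems(2) by blast
    have Ts: "T \<subseteq> {0..<n}" unfolding T_def using sh_sub[OF n] .
    have clX: "\<forall>t\<in>T. sh n t X \<subseteq> X"
    proof (intro ballI subsetI)
      fix t w assume t: "t \<in> T" and w: "w \<in> sh n t X"
      obtain b where b: "b \<in> B" "t = (b + k) mod n" using t unfolding T_def sh_def by blast
      obtain x where x: "x \<in> X" "w = (x + t) mod n" using w unfolding sh_def by blast
      obtain a b' where ab: "a \<in> A" "b' \<in> B" "x = (a+b') mod n" using x unfolding X_def sumset_mod_def by blast
      have "a + n - b0 = a + k" unfolding k_def using b0n by simp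
      then have a2: "(b + (a + k) mod n) mod n \<in> A" using cl ab(1) b0 b(1) unfolding sh_def by fastforce
      have "w = ((b + (a + k) mod n) mod n + b') mod n" using x ab b
        by (simp add: mod_add_left_eq mod_add_right_eq add.commute add.left_commute)
      then show "w \<in> X" using a2 ab(2) unfolding X_def sumset_mod_def by blast
    qed
    have "sh n b0 A \<subseteq> X" unfolding sh_def X_def sumset_mod_def using b0 by blast
    then have cA: "card A \<le> card X" using card_sh[OF less.prems(1)] card_mono finX by metis
    show ?thesis
    proof (cases "X = {0..<n}")
      case True
      then have "X \<union> sh n 1 X = {0..<n}" using sh_sub[OF n] by blast
      then show ?thesis unfolding X_def[symmetric] by simp
    next
      case False
      have "X \<noteq> {}" using \<open>sh n b0 A \<subseteq> X\<close> less.prems(3) unfolding sh_def by blast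
      from key[OF Xs this False Ts clX] cT cA show ?thesis unfolding X_def[symmetric] by simp
    qed
  qed
qed

theorem lemma3p5:
  fixes n c :: nat and A B :: "nat set"
  assumes "n \<ge> 1" and "c \<ge> 2"
    and "A \<subseteq> {0..<n}" and "B \<subseteq> {0..<n}"
    and "A \<noteq> {}" and "B \<noteq> {}"
  shows "card (sumset_mod n (sumset_mod n A B) {k mod n | k. k < c})
           \<ge> min n (card A + card B + (c - 2))"
proof -
  have n: "n > 0" using assms by simp
  define X where "X = sumset_mod n A B"
  have Xs: "X \<subseteq> {0..<n}" unfolding X_def using sumset_sub n .
  have Xne: "X \<noteq> {}" using assms(5,6) unfolding X_def sumset_mod_def by blast
  define Y where "Y k = {(x+j) mod n | x j. x \<in> X \<and> j \<le> k}" for k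
  have Ys: "Y k \<subseteq> {0..<n}" for k unfolding Y_def using n by auto
  have Yne: "Y k \<noteq> {}" for k unfolding Y_def using Xne by blast
  have Y0: "Y 0 = X" unfolding Y_def using Xs by force
  have Ysuc: "Y (Suc k) = Y k \<union> sh n 1 (Y k)" for k
  proof
    show "Y (Suc k) \<subseteq> Y k \<union> sh n 1 (Y k)"
    proof
      fix w assume "w \<in> Y (Suc k)"
      then obtain x j where w: "w = (x+j) mod n" "x \<in> X" "j \<le> Suc k" unfolding Y_def by blast
      show "w \<in> Y k \<union> sh n 1 (Y k)"
      proof (cases "j \<le> k")
        case True then show ?thesis using w unfolding Y_def by blast
      next
        case False
        then have "j = Suc k" using w by simp
        then have "w = ((x+k) mod n + 1) mod n" using w by (simp add: mod_Suc_eq)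
        moreover have "(x+k) mod n \<in> Y k" unfolding Y_def using w by blast
        ultimately show ?thesis unfolding sh_def by blast
      qed
    qed
  next
    show "Y k \<union> sh n 1 (Y k) \<subseteq> Y (Suc k)"
    proof
      fix w assume "w \<in> Y k \<union> sh n 1 (Y k)"
      then consider "w \<in> Y k" | "w \<in> sh n 1 (Y k)" by blast
      then show "w \<in> Y (Suc k)"
      proof cases
        case 1 then show ?thesis unfolding Y_def by fastforce
      next
        case 2
        then obtain x j where "x \<in> X" "j \<le> k" "w = ((x+j) mod n + 1) mod n"
          unfolding sh_def Y_def by blast
        moreover have "((x+j) mod n + 1) mod n = (x + Suc j) mod n" by (simp add: mod_Suc_eq)
        ultimately show ?thesis unfolding Y_def by fastforce
      qed
    qed
  qed
  have Yind: "min n (card (Y 1) + k) \<le> card (Y (Suc k))" for k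
  proof (induction k)
    case 0 then show ?case by simp
  next
    case (Suc k)
    have "min n (card (Y (Suc k)) + 1) \<le> card (Y (Suc (Suc k)))"
      using L1[OF Ys Yne, of "Suc k"] Ysuc[of "Suc k"] by simp
    with Suc show ?case by arith
  qed
  have Y1: "Y 1 = X \<union> sh n 1 X" using Ysuc[of 0] Y0 by simp
  have M': "min n (card A + card B) \<le> card (Y 1)" using M[OF assms(3-6)] Y1 X_def by simp
  have eq: "sumset_mod n X {k mod n | k. k < c} = Y (Suc (c - 2))"
  proof
    show "sumset_mod n X {k mod n | k. k < c} \<subseteq> Y (Suc (c - 2))"
    proof
      fix w assume "w \<in> sumset_mod n X {k mod n | k. k < c}"
      then obtain x k where "x \<in> X" "k < c" "w = (x + k mod n) mod n" unfolding sumset_mod_def by blast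
      moreover have "(x + k mod n) mod n = (x + k) mod n" by (rule mod_add_right_eq)
      ultimately show "w \<in> Y (Suc (c - 2))" unfolding Y_def using assms(2) by fastforce
    qed
  next
    show "Y (Suc (c - 2)) \<subseteq> sumset_mod n X {k mod n | k. k < c}"
    proof
      fix w assume "w \<in> Y (Suc (c - 2))"
      then obtain x j where "x \<in> X" "j \<le> Suc (c-2)" "w = (x + j) mod n" unfolding Y_def by blast
      moreover have "(x + j mod n) mod n = (x + j) mod n" by (rule mod_add_right_eq)
      moreover have "j < c" using assms(2) \<open>j \<le> Suc (c-2)\<close> by simp
      ultimately have "w = (x + j mod n) mod n" "j mod n \<in> {k mod n | k. k < c}" by auto
      then show "w \<in> sumset_mod n X {k mod n | k. k < c}" unfolding sumset_mod_def using \<open>x \<in> X\<close> by blast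
    qed
  qed
  have "min n (card A + card B + (c - 2)) \<le> card (Y (Suc (c - 2)))"
    using Yind[of "c-2"] M' by arith
  then show ?thesis using eq X_def by simp
qed

end
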